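(* Let $G=(V,E,\mu,\omega)$ be a weighted graph with a fixed reference vertex $p\in V$, and suppose there exist constants $D>0$ and $0\le\alpha\le 2$ such that $\mathrm{Deg}(x)\le D\,d(x,p)^{\alpha}$ for all $x\in V$, $x\neq p$. Let $T\in(0,\infty]$. Suppose $u,v\in\mathcal{M}_T$ are both solutions of the wave equation on $(-T,T)\times V$ with the same data $f,g,h$, i.e. $u,v\in C^2_t((-T,T)\times V)$ and for $w\in\{u,v\}$: $$\partial_t^2 w(t,x)-\Delta w(t,x)=f(t,x)\ \ ((t,x)\in(-T,T)\times V),\qquad w(0,x)=g(x),\ \ \partial_t w(0,x)=h(x)\ \ (x\in V),$$ where $f\in C^0_t((-T,T)\times V)$ and $g,h:V\to\mathbb{R}$. Then $u\equiv v$.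
   Context: A weighted graph $G=(V,E,\mu,\omega)$ consists of a locally finite, connected, simple, undirected graph $(V,E)$, a symmetric edge weight $\omega:E\to(0,\infty)$, $\{x,y\}\mapsto\omega_{xy}=\omega_{yx}$, and a vertex weight $\mu:V\to(0,\infty)$. Write $x\sim y$ if $\{x,y\}\in E$; $d(x,y)$ is the combinatorial graph distance. The Laplacian is $\Delta f(x)=\sum_{y\sim x}\frac{\omega_{xy}}{\mu_x}(f(y)-f(x))$ for $f:V\to\mathbb{R}$, and the weighted degree is $\mathrm{Deg}(x)=\sum_{y\sim x}\frac{\omega_{xy}}{\mu_x}$. For an interval $I$ and $k\in\mathbb{N}_0\cup\{\infty\}$, $u\in C^k_t(I\times V)$ means $u:I\times V\to\mathbb{R}$ and $u(\cdot,x)\in C^k(I)$ for every $x\in V$; $\Delta$ acts in the space variable. For $T\in(0,\infty]$, $\mathcal{M}_T$ is the class of functions $u:(-T,T)\times V\to\mathbb{R}$ for which there is a constant $C$ with $|u(t,x)|\le C\,d(x,p)^{(2-\alpha)d(x,p)}$ for all $(t,x)\in(-T,T)\times V$, $x\neq p$ (with $\alpha$ the exponent in the degree growth condition). *)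

theory Defs
  imports "HOL-Analysis.Analysis"
begin

text \<open>A weighted graph on the vertex type 'a (vertex set = UNIV):
  adjacency relation adj, symmetric edge weight w, vertex weight mu.\<close>
definition weighted_graph :: "('a \<Rightarrow> 'a \<Rightarrow> bool) \<Rightarrow> ('a \<Rightarrow> 'a \<Rightarrow> real) \<Rightarrow> ('a \<Rightarrow> real) \<Rightarrow> bool" where
  "weighted_graph adj w mu \<longleftrightarrow>
     (\<forall>x y. adj x y \<longrightarrow> adj y x) \<and>
     (\<forall>x. \<not> adj x x) \<and>
     (\<forall>x. finite {y. adj x y}) \<and>
     (\<forall>x y. adj\<^sup>*\<^sup>* x y) \<and>
     (\<forall>x y. adj x y \<longrightarrow> w x y = w y x \<and> w x y > 0) \<and>
     (\<forall>x. mu x > 0)"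

definition gdist :: "('a \<Rightarrow> 'a \<Rightarrow> bool) \<Rightarrow> 'a \<Rightarrow> 'a \<Rightarrow> nat" where
  "gdist adj x y = (LEAST n. (adj ^^ n) x y)"

definition graph_laplacian :: "('a \<Rightarrow> 'a \<Rightarrow> bool) \<Rightarrow> ('a \<Rightarrow> 'a \<Rightarrow> real) \<Rightarrow> ('a \<Rightarrow> real) \<Rightarrow> ('a \<Rightarrow> real) \<Rightarrow> 'a \<Rightarrow> real" where
  "graph_laplacian adj w mu f x = (\<Sum>y\<in>{y. adj x y}. w x y / mu x * (f y - f x))"

definition wdeg :: "('a \<Rightarrow> 'a \<Rightarrow> bool) \<Rightarrow> ('a \<Rightarrow> 'a \<Rightarrow> real) \<Rightarrow> ('a \<Rightarrow> real) \<Rightarrow> 'a \<Rightarrow> real" where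
  "wdeg adj w mu x = (\<Sum>y\<in>{y. adj x y}. w x y / mu x)"

definition time_int :: "ereal \<Rightarrow> real set" where
  "time_int T = {t. - T < ereal t \<and> ereal t < T}"

definition growth_class :: "('a \<Rightarrow> 'a \<Rightarrow> bool) \<Rightarrow> 'a \<Rightarrow> real \<Rightarrow> ereal \<Rightarrow> (real \<Rightarrow> 'a \<Rightarrow> real) set" where
  "growth_class adj p \<alpha> T = {u. \<exists>C. \<forall>t\<in>time_int T. \<forall>x. x \<noteq> p \<longrightarrow>
      \<bar>u t x\<bar> \<le> C * real (gdist adj x p) powr ((2 - \<alpha>) * real (gdist adj x p))}"

definition wave_solution :: "('a \<Rightarrow> 'a \<Rightarrow> bool) \<Rightarrow> ('a \<Rightarrow> 'a \<Rightarrow> real) \<Rightarrow> ('a \<Rightarrow> real) \<Rightarrow> ereal \<Rightarrow>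
    (real \<Rightarrow> 'a \<Rightarrow> real) \<Rightarrow> ('a \<Rightarrow> real) \<Rightarrow> ('a \<Rightarrow> real) \<Rightarrow> (real \<Rightarrow> 'a \<Rightarrow> real) \<Rightarrow> bool" where
  "wave_solution adj w mu T f g h u \<longleftrightarrow>
     (\<exists>u1 u2. \<forall>x.
        (\<forall>t\<in>time_int T. ((\<lambda>s. u s x) has_real_derivative u1 t x) (at t) \<and>
                          ((\<lambda>s. u1 s x) has_real_derivative u2 t x) (at t)) \<and>
        continuous_on (time_int T) (\<lambda>t. u2 t x) \<and>
        (\<forall>t\<in>time_int T. u2 t x - graph_laplacian adj w mu (u t) x = f t x) \<and>
        u 0 x = g x \<and> u1 0 x = h x)"

end

theory Submission imports Defs "HOL-Real_Asymp.Real_Asymp" begin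

lemma L1:
  fixes \<psi> \<psi>' :: "real \<Rightarrow> real"
  assumes "a \<le> t0" "t0 \<le> b"
    and der: "\<And>s. a\<le>s \<Longrightarrow> s\<le>b \<Longrightarrow> (\<psi> has_real_derivative \<psi>' s) (at s)"
    and z: "\<psi> t0 = 0"
    and bd: "\<And>s. a\<le>s \<Longrightarrow> s\<le>b \<Longrightarrow> \<bar>\<psi>' s\<bar> \<le> M * \<bar>s - t0\<bar>^m"
    and s: "a \<le> s" "s \<le> b"
  shows "\<bar>\<psi> s\<bar> \<le> M * \<bar>s-t0\<bar>^(Suc m) / real (Suc m)"
proof (cases "t0 \<le> s")
  case True
  have h1: "(\<lambda>r. M * (r-t0)^(Suc m) / real (Suc m) - \<psi> r) t0 \<le> (\<lambda>r. M * (r-t0)^(Suc m) / real (Suc m) - \<psi> r) s"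
  proof (rule DERIV_nonneg_imp_nondecreasing[OF True])
    fix r assume r: "t0 \<le> r" "r \<le> s"
    have "((\<lambda>r. M * (r-t0)^(Suc m) / real (Suc m) - \<psi> r) has_real_derivative M * (r-t0)^m - \<psi>' r) (at r)"
      by (rule derivative_eq_intros refl der | use r assms in auto)+
    moreover have "M * (r-t0)^m - \<psi>' r \<ge> 0" using bd[of r] r assms by auto
    ultimately show "\<exists>y. ((\<lambda>r. M * (r-t0)^(Suc m) / real (Suc m) - \<psi> r) has_real_derivative y) (at r) \<and> y \<ge> 0" by blast
  qed
  have h2: "(\<lambda>r. M * (r-t0)^(Suc m) / real (Suc m) + \<psi> r) t0 \<le> (\<lambda>r. M * (r-t0)^(Suc m) / real (Suc m) + \<psi> r) s"
  proof (rule DERIV_nonneg_imp_nondecreasing[OF True])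
    fix r assume r: "t0 \<le> r" "r \<le> s"
    have "((\<lambda>r. M * (r-t0)^(Suc m) / real (Suc m) + \<psi> r) has_real_derivative M * (r-t0)^m + \<psi>' r) (at r)"
      by (rule derivative_eq_intros refl der | use r assms in auto)+
    moreover have "M * (r-t0)^m + \<psi>' r \<ge> 0" using bd[of r] r assms by auto
    ultimately show "\<exists>y. ((\<lambda>r. M * (r-t0)^(Suc m) / real (Suc m) + \<psi> r) has_real_derivative y) (at r) \<and> y \<ge> 0" by blast
  qed
  show ?thesis using h1 h2 z True by (auto simp: abs_le_iff)
next
  case False
  hence F: "s \<le> t0" by auto
  have h1: "(\<lambda>r. M * (t0-r)^(Suc m) / real (Suc m) - \<psi> r) s \<ge> (\<lambda>r. M * (t0-r)^(Suc m) / real (Suc m) - \<psi> r) t0"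
  proof (rule DERIV_nonpos_imp_nonincreasing[OF F])
    fix r assume r: "s \<le> r" "r \<le> t0"
    have "((\<lambda>r. M * (t0-r)^(Suc m) / real (Suc m) - \<psi> r) has_real_derivative - M * (t0-r)^m - \<psi>' r) (at r)"
      by (rule derivative_eq_intros refl der | use r assms in auto)+
    moreover have "- M * (t0-r)^m - \<psi>' r \<le> 0" using bd[of r] r assms by auto
    ultimately show "\<exists>y. ((\<lambda>r. M * (t0-r)^(Suc m) / real (Suc m) - \<psi> r) has_real_derivative y) (at r) \<and> y \<le> 0" by blast
  qed
  have h2: "(\<lambda>r. M * (t0-r)^(Suc m) / real (Suc m) + \<psi> r) s \<ge> (\<lambda>r. M * (t0-r)^(Suc m) / real (Suc m) + \<psi> r) t0"
  proof (rule DERIV_nonpos_imp_nonincreasing[OF F])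
    fix r assume r: "s \<le> r" "r \<le> t0"
    have "((\<lambda>r. M * (t0-r)^(Suc m) / real (Suc m) + \<psi> r) has_real_derivative - M * (t0-r)^m + \<psi>' r) (at r)"
      by (rule derivative_eq_intros refl der | use r assms in auto)+
    moreover have "- M * (t0-r)^m + \<psi>' r \<le> 0" using bd[of r] r assms by auto
    ultimately show "\<exists>y. ((\<lambda>r. M * (t0-r)^(Suc m) / real (Suc m) + \<psi> r) has_real_derivative y) (at r) \<and> y \<le> 0" by blast
  qed
  have "\<bar>s - t0\<bar> = t0 - s" using F by auto
  then show ?thesis using h1 h2 z F by (auto simp: abs_le_iff)
qed

lemma L2:
  fixes \<phi> \<phi>' \<phi>'' :: "real \<Rightarrow> real"
  assumes "a \<le> t0" "t0 \<le> b"
    and der: "\<And>s. a\<le>s \<Longrightarrow> s\<le>b \<Longrightarrow> (\<phi> has_real_derivative \<phi>' s) (at s)"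
    and der2: "\<And>s. a\<le>s \<Longrightarrow> s\<le>b \<Longrightarrow> (\<phi>' has_real_derivative \<phi>'' s) (at s)"
    and z: "\<phi> t0 = 0" "\<phi>' t0 = 0"
    and bd: "\<And>s. a\<le>s \<Longrightarrow> s\<le>b \<Longrightarrow> \<bar>\<phi>'' s\<bar> \<le> M * \<bar>s - t0\<bar>^m"
    and s: "a \<le> s" "s \<le> b"
  shows "\<bar>\<phi> s\<bar> \<le> M * \<bar>s-t0\<bar>^(Suc (Suc m)) / (real (Suc m) * real (Suc (Suc m)))"
proof -
  have 1: "\<bar>\<phi>' r\<bar> \<le> (M / real (Suc m)) * \<bar>r-t0\<bar>^(Suc m)" if "a \<le> r" "r \<le> b" for r
    using L1[of a t0 b \<phi>' \<phi>'' M m r] assms that by auto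
  have "\<bar>\<phi> s\<bar> \<le> (M / real (Suc m)) * \<bar>s-t0\<bar>^(Suc (Suc m)) / real (Suc (Suc m))"
    using L1[of a t0 b \<phi> \<phi>' "M / real (Suc m)" "Suc m" s] assms 1 by blast
  then show ?thesis by simp
qed

lemma fact_ratio: "real (fact (Suc (Suc m))) = real (Suc m) * real (Suc (Suc m)) * real (fact m)"
  by (simp add: algebra_simps)

lemma gdist_adj:
  assumes wg: "weighted_graph adj w mu" and a: "adj x y"
  shows "gdist adj y p \<le> gdist adj x p + 1"
proof -
  have c: "\<forall>x y. adj\<^sup>*\<^sup>* x y" using wg unfolding weighted_graph_def by (elim conjE) assumption
  have s: "\<forall>x y. adj x y \<longrightarrow> adj y x" using wg unfolding weighted_graph_def by (elim conjE) assumption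
  have "\<exists>n. (adj ^^ n) x p" using c by (intro rtranclp_imp_relpowp) simp
  then have "(adj ^^ gdist adj x p) x p" unfolding gdist_def by (rule LeastI_ex)
  moreover have "adj y x" using s a by blast
  ultimately have "(adj ^^ Suc (gdist adj x p)) y p" using relpowp_Suc_I2 by metis
  then show ?thesis unfolding gdist_def[of adj y p] using Least_le[of "\<lambda>n. (adj ^^ n) y p"] by fastforce
qed

lemma wg_fin: "weighted_graph adj w mu \<Longrightarrow> finite {y. adj x y}"
  unfolding weighted_graph_def by (elim conjE) (rule spec)
lemma wg_pos: "weighted_graph adj w mu \<Longrightarrow> adj x y \<Longrightarrow> w x y / mu x > 0"
  unfolding weighted_graph_def by (elim conjE) (simp only: divide_pos_pos)

lemma wdeg_nonneg:
  assumes wg: "weighted_graph adj w mu"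
  shows "wdeg adj w mu x \<ge> 0"
  unfolding wdeg_def using wg_pos[OF wg]
  by (intro sum_nonneg) (simp add: less_imp_le)

lemma lap_bound:
  assumes wg: "weighted_graph adj w mu"
    and b: "\<And>y. adj x y \<Longrightarrow> \<bar>F y\<bar> \<le> Q" and bx: "\<bar>F x\<bar> \<le> Q"
  shows "\<bar>graph_laplacian adj w mu F x\<bar> \<le> wdeg adj w mu x * (2 * Q)"
proof -
  have pos: "w x y / mu x > 0" if "adj x y" for y using wg_pos[OF wg that] .
  have "\<bar>graph_laplacian adj w mu F x\<bar> \<le> (\<Sum>y\<in>{y. adj x y}. \<bar>w x y / mu x * (F y - F x)\<bar>)"
    unfolding graph_laplacian_def by (rule sum_abs)
  also have "\<dots> \<le> (\<Sum>y\<in>{y. adj x y}. w x y / mu x * (2 * Q))"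
  proof (rule sum_mono)
    fix y assume y: "y \<in> {y. adj x y}"
    have "\<bar>F y - F x\<bar> \<le> 2 * Q" using b[of y] bx y by auto
    moreover have "w x y / mu x > 0" using pos y by simp
    ultimately show "\<bar>w x y / mu x * (F y - F x)\<bar> \<le> w x y / mu x * (2 * Q)"
      by (metis abs_mult abs_of_pos less_imp_le mult_left_mono)
  qed
  also have "\<dots> = wdeg adj w mu x * (2 * Q)" unfolding wdeg_def by (simp add: sum_distrib_right)
  finally show ?thesis .
qed

lemma iter_bound:
  fixes W W1 W2 :: "real \<Rightarrow> 'a \<Rightarrow> real" and Kf Gf :: "real \<Rightarrow> real"
  assumes wg: "weighted_graph adj w mu"
    and ab: "a \<le> t0" "t0 \<le> b"
    and der: "\<And>x s. a \<le> s \<Longrightarrow> s \<le> b \<Longrightarrow> ((\<lambda>s. W s x) has_real_derivative W1 s x) (at s)"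
    and der2: "\<And>x s. a \<le> s \<Longrightarrow> s \<le> b \<Longrightarrow> ((\<lambda>s. W1 s x) has_real_derivative W2 s x) (at s)"
    and eq: "\<And>x s. a \<le> s \<Longrightarrow> s \<le> b \<Longrightarrow> W2 s x = graph_laplacian adj w mu (W s) x"
    and init: "\<And>x. W t0 x = 0" "\<And>x. W1 t0 x = 0"
    and Kmono: "\<And>r r'. 0 \<le> r \<Longrightarrow> r \<le> r' \<Longrightarrow> Kf r \<le> Kf r'" and Knn: "\<And>r. 0 \<le> r \<Longrightarrow> 0 \<le> Kf r"
    and Gmono: "\<And>r r'. 0 \<le> r \<Longrightarrow> r \<le> r' \<Longrightarrow> Gf r \<le> Gf r'" and Gnn: "\<And>r. 0 \<le> r \<Longrightarrow> 0 \<le> Gf r"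
    and deg: "\<And>x. wdeg adj w mu x \<le> Kf (real (gdist adj x p))"
    and base: "\<And>x s. a \<le> s \<Longrightarrow> s \<le> b \<Longrightarrow> \<bar>W s x\<bar> \<le> Gf (real (gdist adj x p))"
  shows "a \<le> s \<Longrightarrow> s \<le> b \<Longrightarrow> \<bar>W s x\<bar> \<le> (2 * Kf (real (gdist adj x p) + real k))^k * Gf (real (gdist adj x p) + real k) * \<bar>s - t0\<bar>^(2*k) / fact (2*k)"
proof (induction k arbitrary: x s)
  case 0
  then show ?case using base by simp
next
  case (Suc k)
  define E where "E m = (2 * Kf (m + real k))^k * Gf (m + real k)" for m
  have Emono: "E m \<le> E m'" if "0 \<le> m" "m \<le> m'" for m m'
    unfolding E_def using that
  proof (intro mult_mono power_mono)
    show "0 \<le> (2 * Kf (m' + real k)) ^ k" using Knn[of "m' + real k"] that by simp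
  qed (auto intro!: Kmono Gmono Knn Gnn)
  have Enn: "0 \<le> E m" if "0 \<le> m" for m unfolding E_def using that Knn[of "m + real k"] Gnn[of "m + real k"] by simp
  define n where "n = real (gdist adj x p)"
  have n0: "n \<ge> 0" unfolding n_def by simp
  define M where "M = 2 * Kf n * E (n+1) / fact (2*k)"
  have IH: "\<bar>W r y\<bar> \<le> E (real (gdist adj y p)) * \<bar>r - t0\<bar>^(2*k) / fact (2*k)" if "a \<le> r" "r \<le> b" for r y
    using Suc.IH[OF that] unfolding E_def by simp
  have bd2: "\<bar>W2 r x\<bar> \<le> M * \<bar>r - t0\<bar>^(2*k)" if r: "a \<le> r" "r \<le> b" for r
  proof -
    define Q where "Q = E (n+1) * \<bar>r - t0\<bar>^(2*k) / fact (2*k)"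
    have Q0: "Q \<ge> 0" unfolding Q_def using Enn[of "n+1"] n0 by simp
    have "\<bar>W r y\<bar> \<le> Q" if "adj x y" for y
    proof -
      have "real (gdist adj y p) \<le> n + 1" using gdist_adj[OF wg that, of p] unfolding n_def by simp
      then have "E (real (gdist adj y p)) \<le> E (n+1)" by (intro Emono) auto
      then show ?thesis using IH[OF r, of y] unfolding Q_def
        by (smt (verit, ccfv_SIG) divide_right_mono fact_ge_zero mult_right_mono zero_le_power abs_ge_zero)
    qed
    moreover have "\<bar>W r x\<bar> \<le> Q"
    proof -
      have "E n \<le> E (n+1)" using n0 by (intro Emono) auto
      then show ?thesis using IH[OF r, of x] unfolding Q_def n_def[symmetric]
        by (smt (verit, ccfv_SIG) divide_right_mono fact_ge_zero mult_right_mono zero_le_power abs_ge_zero)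
    qed
    ultimately have "\<bar>graph_laplacian adj w mu (W r) x\<bar> \<le> wdeg adj w mu x * (2 * Q)"
      by (intro lap_bound[OF wg])
    also have "\<dots> \<le> Kf n * (2 * Q)" using deg[of x] Q0 unfolding n_def by (intro mult_right_mono) auto
    also have "\<dots> = M * \<bar>r - t0\<bar>^(2*k)" unfolding M_def Q_def by simp
    finally show ?thesis using eq[OF r] by simp
  qed
  have "\<bar>W s x\<bar> \<le> M * \<bar>s-t0\<bar>^(Suc (Suc (2*k))) / (real (Suc (2*k)) * real (Suc (Suc (2*k))))"
    by (rule L2[of a t0 b "\<lambda>s. W s x" "\<lambda>s. W1 s x" "\<lambda>s. W2 s x"])
       (use ab der der2 init bd2 Suc.prems in auto)
  also have "\<dots> = 2 * Kf n * E (n+1) * \<bar>s-t0\<bar>^(2*Suc k) / fact (2 * Suc k)"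
    unfolding M_def by (simp add: fact_ratio algebra_simps)
  also have "\<dots> \<le> (2 * Kf (n + real (Suc k)))^(Suc k) * Gf (n + real (Suc k)) * \<bar>s-t0\<bar>^(2*Suc k) / fact (2 * Suc k)"
  proof -
    have "Kf n \<le> Kf (n + real (Suc k))" using n0 by (intro Kmono) auto
    then have "2 * Kf n * E (n+1) \<le> (2 * Kf (n + real (Suc k)))^(Suc k) * Gf (n + real (Suc k))"
    proof -
      define K' where "K' = Kf (n + real (Suc k))"
      define G' where "G' = Gf (n + real (Suc k))"
      have e: "E (n+1) = (2*K')^k * G'" unfolding E_def K'_def G'_def by (simp add: add_ac)
      have "0 \<le> (2*K')^k * G'" unfolding K'_def G'_def using Knn[of "n + real (Suc k)"] Gnn[of "n + real (Suc k)"] n0 by simp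
      then have "2 * Kf n * ((2*K')^k * G') \<le> 2 * K' * ((2*K')^k * G')"
        using \<open>Kf n \<le> Kf (n + real (Suc k))\<close> unfolding K'_def by (intro mult_right_mono) auto
      then show ?thesis unfolding e K'_def[symmetric] G'_def[symmetric] by (simp add: algebra_simps)
    qed
    then show ?thesis by (intro divide_right_mono mult_right_mono) auto
  qed
  finally show ?case unfolding n_def .
qed


lemma pow_le_exp_fact: "(x::real) \<ge> 0 \<Longrightarrow> x ^ n / fact n \<le> exp x"
proof -
  assume x: "x \<ge> 0"
  have s: "(\<lambda>n. x^n / fact n) sums exp x" using exp_converges[of x] by (simp add: divide_inverse mult.commute scaleR_conv_of_real)
  have "(\<Sum>i\<in>{n}. x^i / fact i) \<le> exp x"
    using sum_le_suminf[OF sums_summable[OF s], of "{n}"] x sums_unique[OF s] by auto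
  then show ?thesis by simp
qed

lemma term_bound:
  fixes K0 A B D \<alpha> c \<sigma> :: real and n k :: nat
  assumes K0: "K0 \<ge> 0" and A: "A \<ge> 0" and B: "B \<ge> 0" and D: "D > 0" and al: "0 \<le> \<alpha>" "\<alpha> \<le> 2"
    and c: "c = 2 * (K0 + D)" and \<sigma>: "0 \<le> \<sigma>" and small: "c * exp 2 * \<sigma>^2 \<le> 1/4" and k: "k \<ge> n + 1"
  shows "(2 * (K0 + D * (real n + real k) powr \<alpha>))^k * (A + B * ((real n + real k) + 1) powr ((2-\<alpha>) * ((real n + real k) + 1))) * \<sigma>^(2*k) / fact (2*k)
     \<le> (A + B) * (1/4)^k * (2 * real k)^(2*n+2)"
proof -
  define X where "X = real n + real k + 1"
  have X1: "X \<ge> 1" unfolding X_def by simp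
  have X2: "X \<le> 2 * real k" unfolding X_def using k by simp
  have c0: "c \<ge> 0" using c K0 D by simp
  have a: "2 * (K0 + D * (real n + real k) powr \<alpha>) \<le> c * X powr \<alpha>"
  proof -
    have "(real n + real k) powr \<alpha> \<le> X powr \<alpha>" unfolding X_def using al by (intro powr_mono2) auto
    then have 1: "D * (real n + real k) powr \<alpha> \<le> D * X powr \<alpha>" using D by (intro mult_left_mono) auto
    have "1 \<le> X powr \<alpha>" using X1 al by (intro ge_one_powr_ge_zero)
    then have 2: "K0 \<le> K0 * X powr \<alpha>" using mult_left_mono[of 1 "X powr \<alpha>" K0] K0 by simp
    show ?thesis unfolding c using 1 2 by (simp add: algebra_simps)
  qed
  have a0: "0 \<le> 2 * (K0 + D * (real n + real k) powr \<alpha>)" using K0 D by simp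
  have ak: "(2 * (K0 + D * (real n + real k) powr \<alpha>))^k \<le> c^k * X powr (real k * \<alpha>)"
  proof -
    have "(2 * (K0 + D * (real n + real k) powr \<alpha>))^k \<le> (c * X powr \<alpha>)^k" by (rule power_mono[OF a a0])
    also have "\<dots> = c^k * X powr (real k * \<alpha>)" using X1 by (simp add: power_mult_distrib powr_power)
    finally show ?thesis .
  qed
  have Y1: "1 \<le> X powr ((2-\<alpha>) * X)" using X1 al by (intro ge_one_powr_ge_zero) auto
  have b: "A + B * X powr ((2-\<alpha>) * X) \<le> (A + B) * X powr ((2-\<alpha>) * X)"
  proof -
    have "A \<le> A * X powr ((2-\<alpha>) * X)" using mult_left_mono[OF Y1 A] by simp
    then show ?thesis by (simp add: algebra_simps)
  qed
  have e: "real k * \<alpha> + (2-\<alpha>) * X = real (2*k) + (2-\<alpha>) * (real n + 1)" unfolding X_def by (simp add: algebra_simps)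
  have prod: "X powr (real k * \<alpha>) * X powr ((2-\<alpha>) * X) = X^(2*k) * X powr ((2-\<alpha>) * (real n + 1))"
  proof -
    have "X powr (real k * \<alpha>) * X powr ((2-\<alpha>) * X) = X powr (real (2*k) + (2-\<alpha>) * (real n + 1))"
      by (simp only: powr_add[symmetric] e)
    also have "\<dots> = X powr (real (2*k)) * X powr ((2-\<alpha>) * (real n + 1))" by (rule powr_add)
    also have "\<dots> = X^(2*k) * X powr ((2-\<alpha>) * (real n + 1))" using X1 by (simp only: powr_realpow)
    finally show ?thesis .
  qed
  have f1: "X^(2*k) \<le> exp (real (2*k)) * fact (2*k)"
  proof -
    have "X^(2*k) \<le> (real (2*k))^(2*k)" using X1 X2 by (intro power_mono) auto
    also have "\<dots> \<le> exp (real (2*k)) * fact (2*k)" using pow_le_exp_fact[of "real (2*k)" "2*k"]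
      by (simp add: divide_le_eq)
    finally show ?thesis .
  qed
  have f2: "X powr ((2-\<alpha>) * (real n + 1)) \<le> (2 * real k)^(2*n+2)"
  proof -
    have "X powr ((2-\<alpha>) * (real n + 1)) \<le> (2 * real k) powr ((2-\<alpha>) * (real n + 1))"
      using X1 X2 al by (intro powr_mono2) auto
    also have "\<dots> \<le> (2 * real k) powr (real (2*n+2))"
      using X1 X2 al by (intro powr_mono) (auto simp: algebra_simps)
    also have "\<dots> = (2 * real k)^(2*n+2)" using X1 X2 by (intro powr_realpow) auto
    finally show ?thesis .
  qed
  have g: "c^k * exp (real (2*k)) * \<sigma>^(2*k) \<le> (1/4)^k"
  proof -
    have "c^k * exp (real (2*k)) * \<sigma>^(2*k) = (c * exp 2 * \<sigma>^2)^k"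
    proof -
      have "exp (real (2*k)) = exp 2 ^ k" using exp_of_nat_mult[of k 2] by (simp add: mult.commute)
      moreover have "\<sigma>^(2*k) = (\<sigma>^2)^k" by (simp add: power_mult)
      ultimately show ?thesis by (simp add: power_mult_distrib)
    qed
    also have "\<dots> \<le> (1/4)^k" using small c0 \<sigma> by (intro power_mono) auto
    finally show ?thesis .
  qed
  have "(2 * (K0 + D * (real n + real k) powr \<alpha>))^k * (A + B * X powr ((2-\<alpha>) * X)) * \<sigma>^(2*k) / fact (2*k)
      \<le> c^k * X powr (real k * \<alpha>) * ((A + B) * X powr ((2-\<alpha>) * X)) * \<sigma>^(2*k) / fact (2*k)"
    using ak b a0 A B \<sigma> Y1 c0 by (intro divide_right_mono mult_right_mono mult_mono) auto
  also have "\<dots> = (A + B) * (c^k * \<sigma>^(2*k)) * (X^(2*k) * X powr ((2-\<alpha>) * (real n + 1))) / fact (2*k)"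
    using prod by (simp add: algebra_simps)
  also have "\<dots> \<le> (A + B) * (c^k * \<sigma>^(2*k)) * ((exp (real (2*k)) * fact (2*k)) * (2 * real k)^(2*n+2)) / fact (2*k)"
    using f1 f2 A B c0 \<sigma> X1 by (intro divide_right_mono mult_left_mono mult_mono) auto
  also have "\<dots> = (A + B) * (c^k * exp (real (2*k)) * \<sigma>^(2*k)) * (2 * real k)^(2*n+2)"
  proof -
    have fne: "(fact (2*k) :: real) \<noteq> 0" by simp
    have "(A + B) * (c^k * \<sigma>^(2*k)) * ((exp (real (2*k)) * fact (2*k)) * (2 * real k)^(2*n+2)) / fact (2*k)
      = ((A + B) * (c^k * exp (real (2*k)) * \<sigma>^(2*k)) * (2 * real k)^(2*n+2)) * fact (2*k) / fact (2*k)"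
      by (simp only: mult_ac)
    then show ?thesis using fne by simp
  qed
  also have "\<dots> \<le> (A + B) * (1/4)^k * (2 * real k)^(2*n+2)"
    using g A B by (intro mult_right_mono mult_left_mono) auto
  finally show ?thesis unfolding X_def by (simp add: add.assoc)
qed


lemma lim0: "(\<lambda>k. (1/4::real)^k * (2 * real k) ^ j) \<longlonglongrightarrow> 0"
  by real_asymp

lemma local_zero:
  fixes W Wa Wb :: "real \<Rightarrow> 'a \<Rightarrow> real"
  assumes wg: "weighted_graph adj w mu"
    and ab: "a \<le> tz" "tz \<le> b"
    and der: "\<And>x s. a \<le> s \<Longrightarrow> s \<le> b \<Longrightarrow> ((\<lambda>s. W s x) has_real_derivative Wa s x) (at s)"
    and der2: "\<And>x s. a \<le> s \<Longrightarrow> s \<le> b \<Longrightarrow> ((\<lambda>s. Wa s x) has_real_derivative Wb s x) (at s)"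
    and eq: "\<And>x s. a \<le> s \<Longrightarrow> s \<le> b \<Longrightarrow> Wb s x = graph_laplacian adj w mu (W s) x"
    and init: "\<And>x. W tz x = 0" "\<And>x. Wa tz x = 0"
    and D: "D > 0" and al: "0 \<le> \<alpha>" "\<alpha> \<le> 2"
    and degc: "\<forall>x. x \<noteq> p \<longrightarrow> wdeg adj w mu x \<le> D * real (gdist adj x p) powr \<alpha>"
    and A: "A \<ge> 0" and Ap: "\<And>s. a \<le> s \<Longrightarrow> s \<le> b \<Longrightarrow> \<bar>W s p\<bar> \<le> A"
    and B: "B \<ge> 0"
    and Bx: "\<And>s x. a \<le> s \<Longrightarrow> s \<le> b \<Longrightarrow> x \<noteq> p \<Longrightarrow> \<bar>W s x\<bar> \<le> B * real (gdist adj x p) powr ((2-\<alpha>) * real (gdist adj x p))"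
    and s: "a \<le> s" "s \<le> b" "\<bar>s - tz\<bar> \<le> 1 / (2 * exp 1 * (2 * (wdeg adj w mu p + D) + 1))"
  shows "W s x = 0"
proof -
  define K0 where "K0 = wdeg adj w mu p"
  have K0: "K0 \<ge> 0" unfolding K0_def by (rule wdeg_nonneg[OF wg])
  define Kf where "Kf r = K0 + D * r powr \<alpha>" for r
  define Gf where "Gf r = A + B * (r+1) powr ((2-\<alpha>) * (r+1))" for r
  define c where "c = 2 * (K0 + D)"
  have c0: "c \<ge> 0" unfolding c_def using K0 D by simp
  define n where "n = gdist adj x p"
  have bnd: "\<bar>W s x\<bar> \<le> (2 * Kf (real n + real k))^k * Gf (real n + real k) * \<bar>s - tz\<bar>^(2*k) / fact (2*k)" for k
    unfolding n_def
  proof (rule iter_bound[OF wg ab der der2 eq init _ _ _ _ _ _ s(1,2)])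
    show "Kf r \<le> Kf r'" if "0 \<le> r" "r \<le> r'" for r r'
      unfolding Kf_def using that al D by (auto intro!: mult_left_mono powr_mono2)
    show "0 \<le> Kf r" for r unfolding Kf_def using K0 D by simp
    show "Gf r \<le> Gf r'" if "0 \<le> r" "r \<le> r'" for r r'
    proof -
      have "(r+1) powr ((2-\<alpha>) * (r+1)) \<le> (r'+1) powr ((2-\<alpha>) * (r+1))"
        using that al by (intro powr_mono2) auto
      also have "\<dots> \<le> (r'+1) powr ((2-\<alpha>) * (r'+1))"
        using that al by (intro powr_mono) (auto intro!: mult_left_mono)
      finally show ?thesis unfolding Gf_def using B by (auto intro!: mult_left_mono)
    qed
    show "0 \<le> Gf r" for r unfolding Gf_def using A B by simp
    show "wdeg adj w mu y \<le> Kf (real (gdist adj y p))" for y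
    proof (cases "y = p")
      case True then show ?thesis unfolding Kf_def K0_def using D by simp
    next
      case False then show ?thesis using degc K0 unfolding Kf_def by force
    qed
    show "\<bar>W r y\<bar> \<le> Gf (real (gdist adj y p))" if "a \<le> r" "r \<le> b" for r y
    proof (cases "y = p")
      case True then show ?thesis using Ap[OF that] B unfolding Gf_def by (smt (verit) mult_nonneg_nonneg powr_ge_zero)
    next
      case False
      define d where "d = real (gdist adj y p)"
      have d0: "d \<ge> 0" unfolding d_def by simp
      have "d powr ((2-\<alpha>) * d) \<le> (d+1) powr ((2-\<alpha>) * d)" using d0 al by (intro powr_mono2) auto
      also have "\<dots> \<le> (d+1) powr ((2-\<alpha>) * (d+1))" using d0 al by (intro powr_mono mult_left_mono) auto
      finally have "B * d powr ((2-\<alpha>) * d) \<le> B * (d+1) powr ((2-\<alpha>) * (d+1))" using B by (rule mult_left_mono)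
      then show ?thesis using Bx[OF that False] A unfolding Gf_def d_def[symmetric] by simp
    qed
  qed
  define \<tau> where "\<tau> = 1 / (2 * exp 1 * (c + 1))"
  have st: "\<bar>s - tz\<bar> \<le> \<tau>" using s(3) unfolding \<tau>_def c_def K0_def .
  have small: "c * exp 2 * \<bar>s - tz\<bar>^2 \<le> 1/4"
  proof -
    have tz: "\<tau> \<ge> 0" unfolding \<tau>_def using c0 by simp
    have "\<bar>s - tz\<bar>^2 \<le> \<tau>^2" using st by (intro power_mono) auto
    then have "c * exp 2 * \<bar>s - tz\<bar>^2 \<le> c * exp 2 * \<tau>^2" using c0 by (intro mult_left_mono) auto
    also have "\<dots> = c / (4 * (c+1)^2)"
    proof -
      have e: "exp (2::real) = exp 1 ^ 2" using exp_of_nat_mult[of 2 "1::real"] by simp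
      have ne: "exp (1::real) ^ 2 \<noteq> 0" by simp
      have "c * exp 2 * \<tau>^2 = (exp 1 ^ 2 * c) / (exp 1 ^ 2 * (4 * (c+1)^2))"
        unfolding \<tau>_def e by (simp add: power_divide power_mult_distrib)
      also have "\<dots> = c / (4 * (c+1)^2)" using ne by (rule mult_divide_mult_cancel_left)
      finally show ?thesis .
    qed
    also have "\<dots> \<le> 1/4"
    proof -
      have "c \<le> (c+1)^2" using c0 by (simp add: power2_eq_square algebra_simps)
      then show ?thesis using c0 by (simp add: field_simps)
    qed
    finally show ?thesis .
  qed
  have ev: "\<forall>k\<ge>n+1. \<bar>W s x\<bar> \<le> (A + B) * (1/4)^k * (2 * real k)^(2*n+2)"
  proof (intro allI impI)
    fix k assume k: "k \<ge> n + 1"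
    have "\<bar>W s x\<bar> \<le> (2 * Kf (real n + real k))^k * Gf (real n + real k) * \<bar>s - tz\<bar>^(2*k) / fact (2*k)" by (rule bnd)
    also have "\<dots> \<le> (A + B) * (1/4)^k * (2 * real k)^(2*n+2)"
      unfolding Kf_def Gf_def by (rule term_bound[OF K0 A B D al c_def _ small k]) simp
    finally show "\<bar>W s x\<bar> \<le> (A + B) * (1/4)^k * (2 * real k)^(2*n+2)" .
  qed
  have lim: "(\<lambda>k. (A + B) * ((1/4)^k * (2 * real k)^(2*n+2))) \<longlonglongrightarrow> 0"
    using tendsto_mult_right_zero[OF lim0, of "A+B" "2*n+2"] by simp
  have "\<bar>W s x\<bar> \<le> 0"
    by (rule LIMSEQ_le_const[OF lim]) (use ev in \<open>auto simp: mult.assoc\<close>)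
  then show ?thesis by simp
qed


lemma deriv_zero_nbhd:
  fixes f :: "real \<Rightarrow> real"
  assumes "(f has_real_derivative f') (at t0)" "open S" "t0 \<in> S" "\<And>r. r \<in> S \<Longrightarrow> f r = 0"
  shows "f' = 0"
proof -
  have "((\<lambda>r. 0) has_real_derivative f') (at t0)"
    by (rule has_field_derivative_transform_within_open[OF assms(1-3)]) (use assms(4) in auto)
  then show ?thesis using DERIV_const DERIV_unique by blast
qed

lemma lap_diff: "graph_laplacian adj w mu (\<lambda>y. F y - G y) x = graph_laplacian adj w mu F x - graph_laplacian adj w mu G x"
  unfolding graph_laplacian_def sum_subtractf[symmetric] by (rule sum.cong) (simp_all add: right_diff_distrib)

lemma time_int_sub:
  assumes "t \<in> time_int T" "\<bar>s\<bar> \<le> \<bar>t\<bar>"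
  shows "s \<in> time_int T"
  using assms unfolding time_int_def
  by (cases T) (auto simp: abs_le_iff abs_if split: if_splits)

theorem theorem1p2:
  fixes adj :: "'a \<Rightarrow> 'a \<Rightarrow> bool" and w :: "'a \<Rightarrow> 'a \<Rightarrow> real" and mu :: "'a \<Rightarrow> real"
    and p :: 'a and D \<alpha> :: real and T :: ereal
    and f u v :: "real \<Rightarrow> 'a \<Rightarrow> real" and g h :: "'a \<Rightarrow> real"
  assumes "weighted_graph adj w mu"
    and "D > 0" and "0 \<le> \<alpha>" and "\<alpha> \<le> 2"
    and "\<forall>x. x \<noteq> p \<longrightarrow> wdeg adj w mu x \<le> D * real (gdist adj x p) powr \<alpha>"
    and "T > 0"
    and "\<forall>x. continuous_on (time_int T) (\<lambda>t. f t x)"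
    and "u \<in> growth_class adj p \<alpha> T" and "v \<in> growth_class adj p \<alpha> T"
    and "wave_solution adj w mu T f g h u" and "wave_solution adj w mu T f g h v"
  shows "\<forall>t\<in>time_int T. \<forall>x. u t x = v t x"
proof -
  note wg = assms(1) and D = assms(2) and al = assms(3,4) and degc = assms(5)
  define I where "I = time_int T"
  obtain u1 u2 where hu: "\<And>x. (\<forall>t\<in>I. ((\<lambda>s. u s x) has_real_derivative u1 t x) (at t) \<and>
                          ((\<lambda>s. u1 s x) has_real_derivative u2 t x) (at t)) \<and>
        (\<forall>t\<in>I. u2 t x - graph_laplacian adj w mu (u t) x = f t x) \<and>
        u 0 x = g x \<and> u1 0 x = h x"
    using assms(10) unfolding wave_solution_def I_def by metis
  obtain v1 v2 where hv: "\<And>x. (\<forall>t\<in>I. ((\<lambda>s. v s x) has_real_derivative v1 t x) (at t) \<and>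
                          ((\<lambda>s. v1 s x) has_real_derivative v2 t x) (at t)) \<and>
        (\<forall>t\<in>I. v2 t x - graph_laplacian adj w mu (v t) x = f t x) \<and>
        v 0 x = g x \<and> v1 0 x = h x"
    using assms(11) unfolding wave_solution_def I_def by metis
  define W where "W t x = u t x - v t x" for t x
  define W1 where "W1 t x = u1 t x - v1 t x" for t x
  define W2 where "W2 t x = u2 t x - v2 t x" for t x
  have derW: "((\<lambda>s. W s x) has_real_derivative W1 t x) (at t)" if "t \<in> I" for t x
    unfolding W_def W1_def using hu[of x] hv[of x] that by (auto intro!: DERIV_diff)
  have derW2: "((\<lambda>s. W1 s x) has_real_derivative W2 t x) (at t)" if "t \<in> I" for t x
    unfolding W1_def W2_def using hu[of x] hv[of x] that by (auto intro!: DERIV_diff)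
  have eqW: "W2 t x = graph_laplacian adj w mu (W t) x" if "t \<in> I" for t x
  proof -
    have "u2 t x - graph_laplacian adj w mu (u t) x = f t x" "v2 t x - graph_laplacian adj w mu (v t) x = f t x"
      using hu[of x] hv[of x] that by auto
    then show ?thesis unfolding W2_def W_def lap_diff by simp
  qed
  have W0: "W 0 x = 0" "W1 0 x = 0" for x unfolding W_def W1_def using hu[of x] hv[of x] by auto
  obtain Cu where Cu: "\<forall>t\<in>I. \<forall>x. x \<noteq> p \<longrightarrow> \<bar>u t x\<bar> \<le> Cu * real (gdist adj x p) powr ((2 - \<alpha>) * real (gdist adj x p))"
    using assms(8) unfolding growth_class_def I_def by blast
  obtain Cv where Cv: "\<forall>t\<in>I. \<forall>x. x \<noteq> p \<longrightarrow> \<bar>v t x\<bar> \<le> Cv * real (gdist adj x p) powr ((2 - \<alpha>) * real (gdist adj x p))"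
    using assms(9) unfolding growth_class_def I_def by blast
  define B where "B = \<bar>Cu\<bar> + \<bar>Cv\<bar>"
  have B: "B \<ge> 0" unfolding B_def by simp
  have Bx: "\<bar>W t x\<bar> \<le> B * real (gdist adj x p) powr ((2-\<alpha>) * real (gdist adj x p))" if "t \<in> I" "x \<noteq> p" for t x
  proof -
    define P where "P = real (gdist adj x p) powr ((2-\<alpha>) * real (gdist adj x p))"
    have P: "P \<ge> 0" unfolding P_def by simp
    have "\<bar>u t x\<bar> \<le> Cu * P" "\<bar>v t x\<bar> \<le> Cv * P" using Cu Cv that unfolding P_def by auto
    moreover have "Cu * P \<le> \<bar>Cu\<bar> * P" "Cv * P \<le> \<bar>Cv\<bar> * P" using P by (auto intro!: mult_right_mono)
    ultimately show ?thesis unfolding W_def B_def P_def[symmetric] by (simp add: algebra_simps)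
  qed
  define \<tau> where "\<tau> = 1 / (2 * exp 1 * (2 * (wdeg adj w mu p + D) + 1))"
  have \<tau>0: "\<tau> > 0" unfolding \<tau>_def using wdeg_nonneg[OF wg, of p] D by (auto intro!: divide_pos_pos)
  show ?thesis unfolding I_def[symmetric]
  proof (intro ballI allI)
    fix t x assume t: "t \<in> I"
    define R where "R = \<bar>t\<bar>"
    have inI: "s \<in> I" if "-R \<le> s" "s \<le> R" for s
      using time_int_sub[of t T s] t that unfolding I_def R_def by auto
    have cont: "continuous_on {-R..R} (\<lambda>s. W s p)"
      by (rule continuous_at_imp_continuous_on) (auto intro!: DERIV_isCont derW inI)
    obtain A where A: "A \<ge> 0" "\<And>s. s \<in> {-R..R} \<Longrightarrow> norm (W s p) \<le> A"
      using continuous_on_compact_bound[OF compact_Icc cont] by blast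
    have LZ: "W s y = 0" if "-R \<le> t0" "t0 \<le> R" "\<And>y. W t0 y = 0" "\<And>y. W1 t0 y = 0"
      "-R \<le> s" "s \<le> R" "\<bar>s - t0\<bar> \<le> \<tau>" for t0 s y
    proof (rule local_zero[where a="-R" and b=R and tz=t0 and W=W and Wa=W1 and Wb=W2 and adj=adj and A=A and B=B])
      show "\<bar>s - t0\<bar> \<le> 1 / (2 * exp 1 * (2 * (wdeg adj w mu p + D) + 1))" using that(7) unfolding \<tau>_def .
    qed (use that wg D al degc A B inI derW derW2 eqW Bx in auto)
    have claim: "\<forall>s. -R \<le> s \<and> s \<le> R \<and> \<bar>s\<bar> < real N * \<tau> / 2 \<longrightarrow> (\<forall>y. W s y = 0)" for N
    proof (induction N)
      case 0 then show ?case by simp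
    next
      case (Suc N)
      show ?case
      proof (intro allI impI)
        fix s y assume s: "-R \<le> s \<and> s \<le> R \<and> \<bar>s\<bar> < real (Suc N) * \<tau> / 2"
        show "W s y = 0"
        proof (cases "\<bar>s\<bar> < real N * \<tau> / 2")
          case True then show ?thesis using Suc.IH s by blast
        next
          case False
          define t0 where "t0 = real (N - 1) * \<tau> / 2"
          have t00: "t0 \<ge> 0" unfolding t0_def using \<tau>0 by simp
          have t0lt: "t0 \<le> \<bar>s\<bar>"
          proof (cases N)
            case 0 then show ?thesis unfolding t0_def using False \<tau>0 s by auto
          next
            case (Suc M)
            then show ?thesis unfolding t0_def using False \<tau>0 by (auto simp: field_simps)
          qed
          have dist: "\<bar>s\<bar> - t0 \<le> \<tau>"
          proof (cases N)
            case 0 then show ?thesis unfolding t0_def using s \<tau>0 by auto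
          next
            case (Suc M)
            then show ?thesis unfolding t0_def using s \<tau>0 by (auto simp: field_simps)
          qed
          have R0: "\<bar>s\<bar> \<le> R" using s by auto
          have zero_at: "W t1 z = 0 \<and> W1 t1 z = 0" if t1: "\<bar>t1\<bar> = t0" for t1 z
          proof (cases N)
            case 0
            then have "t1 = 0" using t1 unfolding t0_def by simp
            then show ?thesis using W0 by simp
          next
            case (Suc M)
            define S where "S = {r. \<bar>r\<bar> < real N * \<tau> / 2} \<inter> {-R<..<R}"
            have "{r. \<bar>r\<bar> < real N * \<tau> / 2} = {-(real N * \<tau> / 2)<..<real N * \<tau> / 2}" by auto
            then have oS: "open S" unfolding S_def by (simp add: open_Int)
            have t0N: "t0 < real N * \<tau> / 2" unfolding t0_def using Suc \<tau>0 by (auto simp: field_simps)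
            have "real N * \<tau> / 2 \<le> \<bar>s\<bar>" using False by simp
            then have t1S: "t1 \<in> S" unfolding S_def using t1 t0N t0lt R0 by auto
            have Sz: "W r z' = 0" if "r \<in> S" for r z'
              using Suc.IH that unfolding S_def by auto
            have t1I: "t1 \<in> I" using t1 t0lt R0 inI by auto
            have "W1 t1 z = 0"
              by (rule deriv_zero_nbhd[OF derW[OF t1I] oS t1S]) (use Sz in auto)
            then show ?thesis using Sz[OF t1S] by simp
          qed
          show ?thesis
          proof (cases "s \<ge> 0")
            case True
            show ?thesis
              by (rule LZ[of t0]) (use True zero_at[of t0] t00 t0lt R0 s dist in auto)
          next
            case False
            show ?thesis
              by (rule LZ[of "-t0"]) (use False zero_at[of "-t0"] t00 t0lt R0 s dist in auto)
          qed
        qed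
      qed
    qed
    obtain N where N: "2 * R / \<tau> < real N" using reals_Archimedean2 by blast
    have "\<bar>t\<bar> < real N * \<tau> / 2" using N \<tau>0 unfolding R_def by (auto simp: field_simps)
    moreover have "- R \<le> t" "t \<le> R" unfolding R_def by auto
    ultimately have "W t x = 0" using claim[of N] by blast
    then show "u t x = v t x" unfolding W_def by simp
  qed
qed

end
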